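(* Let $d\geq 1$, let $Q\subset\mathbb{Z}_+^d$ be a lower set with $|Q|=n$, and let $k$ be a positive integer. Then the number $C(Q,k,d)$ of lower sets $Q'\subset Q$ with $|Q'|\geq n-k$ satisfies $$C(Q,k,d)<\Big(\max\Big\{8,\frac{4eT(n)}{k}\Big\}\Big)^k.$$
   Context: $\mathbb{Z}_+=\{0,1,2,\dots\}$. A set $Q\subset\mathbb{Z}_+^d$ is a lower set if whenever $q\in Q$ and $q'\in\mathbb{Z}_+^d$ satisfies $q'_i\leq q_i$ for all $i$, then $q'\in Q$. For $q,q'\in\mathbb{Z}_+^d$ write $q\succ q'$ if $q_i\geq q'_i$ for all $i$. For a lower set $Q$, $M(Q)$ denotes the set of all $q'\in Q$ such that no $q\in Q\setminus\{q'\}$ satisfies $q\succ q'$ (the maximal available subset of $Q$). $T(n):=\max\{|M(Q)|: Q\subset\mathbb{Z}_+^d \text{ a lower set},\ |Q|=n\}$. *)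

theory Defs
  imports Complex_Main
begin

text \<open>Points of Z_+^d are represented as lists of naturals of length d.\<close>

definition Zd :: "nat \<Rightarrow> nat list set" where
  "Zd d = {q. length q = d}"

definition dominates :: "nat list \<Rightarrow> nat list \<Rightarrow> bool" (infix "\<succ>" 50) where
  "q \<succ> q' \<longleftrightarrow> length q = length q' \<and> (\<forall>i<length q. q' ! i \<le> q ! i)"

definition lower_set :: "nat \<Rightarrow> nat list set \<Rightarrow> bool" where
  "lower_set d Q \<longleftrightarrow> Q \<subseteq> Zd d \<and>
     (\<forall>q\<in>Q. \<forall>q'\<in>Zd d. (\<forall>i<d. q' ! i \<le> q ! i) \<longrightarrow> q' \<in> Q)"

definition max_avail :: "nat list set \<Rightarrow> nat list set" where
  "max_avail Q = {q'\<in>Q. \<not> (\<exists>q\<in>Q - {q'}. q \<succ> q')}"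

definition T :: "nat \<Rightarrow> nat \<Rightarrow> nat" where
  "T d n = Max {card (max_avail Q) | Q. lower_set d Q \<and> finite Q \<and> card Q = n}"

definition C :: "nat list set \<Rightarrow> nat \<Rightarrow> nat \<Rightarrow> nat" where
  "C Q k d = card {Q'. Q' \<subseteq> Q \<and> lower_set d Q' \<and> card Q' + k \<ge> card Q}"

end

theory Submission
  imports Defs
begin

lemma fact_exp_bound: "real k ^ k \<le> exp (real k) * fact k"
proof -
  have s: "(\<lambda>n. real k ^ n / fact n) sums exp (real k)"
    using exp_converges[of "real k"] by (simp add: divide_inverse_commute)
  have "real k ^ k / fact k \<le> exp (real k)"
  proof -
    have "(\<Sum>i\<in>{k}. real k ^ i / fact i) \<le> (\<Sum>i. real k ^ i / fact i)"
      by (rule sum_le_suminf) (use s in \<open>auto simp: sums_iff\<close>)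
    then show ?thesis using s by (simp add: sums_iff)
  qed
  then show ?thesis by (simp add: field_simps)
qed

lemma choose_le_pow_fact: "real (n choose k) \<le> real n ^ k / fact k"
proof (cases "k \<le> n")
  case True
  have "real (n choose k) = real (fact n) / (fact k * fact (n - k))"
    using binomial_fact[OF True] by simp
  also have "\<dots> = (real (fact n) / fact (n - k)) / fact k" by (simp add: divide_divide_eq_left mult.commute)
  also have "real (fact n) / fact (n - k) \<le> real n ^ k"
  proof -
    have "fact n div fact (n - k) \<le> n ^ k" by (rule fact_div_fact_le_pow[OF True])
    moreover have "fact (n - k) dvd (fact n :: nat)" by (simp add: fact_dvd)
    ultimately show ?thesis
      by (metis fact_nonzero of_nat_fact of_nat_le_iff of_nat_power real_of_nat_div)
  qed
  hence "(real (fact n) / fact (n - k)) / fact k \<le> real n ^ k / fact k"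
    by (rule divide_right_mono) simp
  finally show ?thesis .
next
  case False then show ?thesis by (simp add: binomial_eq_0)
qed

lemma num_bound:
  fixes T k :: nat assumes "k > 0"
  shows "real (Suc (T + k) choose k) < (max 8 (4 * exp 1 * real T / real k)) ^ k"
proof (cases "T \<le> k")
  case True
  have "Suc (T + k) choose k \<le> Suc (2*k) choose k" by (rule binomial_right_mono) (use True in auto)
  also have "2 * (Suc (2*k) choose k) \<le> 2 ^ Suc (2*k)"
  proof -
    have e: "Suc (2*k) choose k = Suc (2*k) choose (Suc k)"
      by (subst binomial_symmetric) auto
    have "(\<Sum>i\<in>{k, Suc k}. Suc (2*k) choose i) \<le> (\<Sum>i\<le>Suc (2*k). Suc (2*k) choose i)"
      by (rule sum_mono2) auto
    then show ?thesis using e choose_row_sum[of "Suc (2*k)"] by (simp del: binomial_Suc_Suc)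
  qed
  hence "Suc (2*k) choose k \<le> 4 ^ k" by (simp add: power_mult)
  finally have "real (Suc (T + k) choose k) \<le> 4 ^ k" by (metis of_nat_le_iff of_nat_numeral of_nat_power)
  also have "(4::real) ^ k < 8 ^ k" using assms by (intro power_strict_mono) auto
  also have "(8::real) ^ k \<le> (max 8 (4 * exp 1 * real T / real k)) ^ k"
    by (intro power_mono) auto
  finally show ?thesis .
next
  case False
  have "Suc (T + k) choose k \<le> (2*T) choose k" by (rule binomial_right_mono) (use False in auto)
  hence "real (Suc (T + k) choose k) \<le> real (2*T) ^ k / fact k"
    using choose_le_pow_fact[of "2*T" k] by linarith
  also have "\<dots> = real (2*T) ^ k * exp (real k) / (exp (real k) * fact k)" by simp
  also have "\<dots> \<le> real (2*T) ^ k * exp (real k) / real k ^ k"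
    using fact_exp_bound[of k] assms by (intro divide_left_mono) auto
  also have "exp (real k) = exp 1 ^ k" using exp_of_nat_mult[of k 1] by simp
  also have "real (2*T) ^ k * exp 1 ^ k / real k ^ k = (2 * exp 1 * real T / real k) ^ k"
    by (simp add: power_divide power_mult_distrib mult.commute mult.left_commute)
  also have "\<dots> < (4 * exp 1 * real T / real k) ^ k"
    using assms False by (intro power_strict_mono) (auto simp: divide_strict_right_mono)
  also have "\<dots> \<le> (max 8 (4 * exp 1 * real T / real k)) ^ k"
    using assms by (intro power_mono) auto
  finally show ?thesis .
qed


definition up_in :: "nat list set \<Rightarrow> nat list set \<Rightarrow> bool" where
  "up_in P R \<longleftrightarrow> R \<subseteq> P \<and> (\<forall>x\<in>R. \<forall>y\<in>P. y \<succ> x \<longrightarrow> y \<in> R)"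

lemma dom_sum:
  assumes "y \<succ> x" "y \<noteq> x" shows "sum_list x < sum_list y"
proof -
  have len: "length y = length x" and le: "\<And>i. i < length x \<Longrightarrow> x ! i \<le> y ! i"
    using assms(1) by (auto simp: dominates_def)
  obtain i where i: "i < length x" "x ! i \<noteq> y ! i"
    using assms(2) len by (metis nth_equalityI)
  have "(\<Sum>i = 0..<length x. x ! i) < (\<Sum>i = 0..<length x. y ! i)"
    using le i by (intro sum_strict_mono_ex1) (auto intro!: bexI[of _ i] le_neq_implies_less)
  then show ?thesis by (simp add: sum_list_sum_nth len)
qed

lemma exists_max:
  assumes "finite R" "R \<noteq> {}" "up_in P R"
  shows "R \<inter> max_avail P \<noteq> {}"
proof -
  have "Max (sum_list ` R) \<in> sum_list ` R" using assms(1,2) by simp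
  then obtain x where x1: "x \<in> R" "sum_list x = Max (sum_list ` R)"
    by (metis imageE)
  have x: "x \<in> R" "\<And>y. y \<in> R \<Longrightarrow> sum_list y \<le> sum_list x"
    using x1 assms(1) by auto
  have "x \<in> max_avail P"
  proof -
    have "x \<in> P" using x assms(3) by (auto simp: up_in_def)
    moreover have "\<not> (\<exists>q\<in>P - {x}. q \<succ> x)"
    proof
      assume "\<exists>q\<in>P - {x}. q \<succ> x"
      then obtain q where q: "q \<in> P" "q \<noteq> x" "q \<succ> x" by auto
      then have "q \<in> R" using x assms(3) by (auto simp: up_in_def)
      with x(2) dom_sum[OF q(3,2)] show False by fastforce
    qed
    ultimately show ?thesis by (simp add: max_avail_def)
  qed
  with x show ?thesis by auto
qed

lemma lower_diff:
  assumes "lower_set d P" "L \<subseteq> max_avail P"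
  shows "lower_set d (P - L)"
  unfolding lower_set_def
proof (intro conjI ballI impI)
  show "P - L \<subseteq> Zd d" using assms(1) by (auto simp: lower_set_def)
next
  fix q q' assume q: "q \<in> P - L" and q': "q' \<in> Zd d" and le: "\<forall>i<d. q' ! i \<le> q ! i"
  have "q' \<in> P" using assms(1) q q' le by (auto simp: lower_set_def)
  moreover have "q' \<notin> L"
  proof
    assume "q' \<in> L"
    then have m: "q' \<in> max_avail P" using assms(2) by auto
    have "q \<in> Zd d" using assms(1) q by (auto simp: lower_set_def)
    then have "q \<succ> q'" using q' le by (auto simp: dominates_def Zd_def)
    moreover have "q \<noteq> q'" using q \<open>q' \<in> L\<close> by auto
    ultimately show False using m q by (auto simp: max_avail_def)
  qed
  ultimately show "q' \<in> P - L" by auto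
qed

lemma max_diff: "max_avail P - L \<subseteq> max_avail (P - L)"
  by (auto simp: max_avail_def)

lemma max_sub: "max_avail P \<subseteq> P"
  by (auto simp: max_avail_def)

lemma count_up:
  assumes hT: "\<And>P. lower_set d P \<Longrightarrow> P \<subseteq> Q \<Longrightarrow> card (max_avail P) \<le> Tb"
    and fQ: "finite Q"
  shows "lower_set d P \<Longrightarrow> P \<subseteq> Q \<Longrightarrow> Ob \<subseteq> max_avail P \<Longrightarrow>
    card {R. up_in P R \<and> R \<inter> Ob = {} \<and> card R = j} \<le> (Tb + j - card Ob) choose j"
proof (induction j arbitrary: P Ob rule: less_induct)
  case (less j)
  have fP: "finite P" using less.prems(2) fQ finite_subset by blast
  let ?S = "{R. up_in P R \<and> R \<inter> Ob = {} \<and> card R = j}"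
  show ?case
  proof (cases "j = 0")
    case True
    have "?S \<subseteq> {{}}"
    proof
      fix R assume "R \<in> ?S"
      then have "R \<subseteq> P" "card R = 0" using True by (auto simp: up_in_def)
      moreover have "finite R" using \<open>R \<subseteq> P\<close> fP finite_subset by blast
      ultimately show "R \<in> {{}}" by simp
    qed
    then have "card ?S \<le> card {{}::nat list set}" by (intro card_mono) auto
    then have "card ?S \<le> 1" by simp
    then show ?thesis using True by simp
  next
    case False
    define M where "M = max_avail P"
    define N where "N = M - Ob"
    define m where "m = card M"
    define B where "B = Tb + j - m"
    have fM: "finite M" using fP max_sub M_def finite_subset by metis
    have mT: "m \<le> Tb" using hT less.prems M_def m_def by auto
    have oM: "card Ob \<le> m" using less.prems(3) fM M_def m_def card_mono by auto
    have fO: "finite Ob" using less.prems(3) fM M_def finite_subset by blast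
    have cN: "card N = m - card Ob" unfolding N_def m_def
      by (rule card_Diff_subset[OF fO]) (use less.prems(3) M_def in simp)
    define F where "F = (\<lambda>L. (\<lambda>R'. L \<union> R') ` {R'. up_in (P - L) R' \<and> R' \<inter> (M - L) = {} \<and> card R' = j - card L})"
    have sub: "?S \<subseteq> (\<Union>l\<in>{1..j}. \<Union>L\<in>{L. L \<subseteq> N \<and> card L = l}. F L)"
    proof
      fix R assume R: "R \<in> ?S"
      define L where "L = R \<inter> M"
      have RP: "R \<subseteq> P" using R by (auto simp: up_in_def)
      have fR: "finite R" using RP fP finite_subset by auto
      have "R \<noteq> {}" using R False by auto
      then have Lne: "L \<noteq> {}" using exists_max[OF fR _] R by (auto simp: L_def M_def)
      have fL: "finite L" using fR L_def by auto
      have l1: "card L \<ge> 1" using Lne fL by (simp add: Suc_le_eq card_gt_0_iff)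
      have lj: "card L \<le> j" using R fR L_def card_mono by fastforce
      have LN: "L \<subseteq> N" using R by (auto simp: L_def N_def)
      have u: "up_in (P - L) (R - L)" using R by (auto simp: up_in_def)
      have c: "card (R - L) = j - card L" using R card_Diff_subset[OF fL, of R] by (auto simp: L_def)
      have "R - L \<in> {R'. up_in (P - L) R' \<and> R' \<inter> (M - L) = {} \<and> card R' = j - card L}"
        using u c by (auto simp: L_def)
      moreover have "R = L \<union> (R - L)" using L_def by auto
      ultimately have "R \<in> F L" unfolding F_def by blast
      then show "R \<in> (\<Union>l\<in>{1..j}. \<Union>L\<in>{L. L \<subseteq> N \<and> card L = l}. F L)"
        using l1 lj LN by (intro UN_I[of "card L"] UN_I[of L]) auto
    qed
    have bnd: "card (F L) \<le> B choose (j - l)" if L: "L \<subseteq> N" "card L = l" "l \<in> {1..j}" for L l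
    proof -
      have LM: "L \<subseteq> max_avail P" using L N_def M_def by auto
      have fL: "finite L" using L(1) N_def fM finite_subset by blast
      have lm: "l \<le> m" using L fM LM M_def m_def card_mono N_def by (metis Diff_subset subset_trans)
      have cML: "card (M - L) = m - l" using LM fM M_def m_def L(2) by (simp add: card_Diff_subset fL)
      have fin: "finite {R'. up_in (P - L) R' \<and> R' \<inter> (M - L) = {} \<and> card R' = j - card L}"
        by (rule finite_subset[of _ "Pow P"]) (use fP in \<open>auto simp: up_in_def\<close>)
      have "card (F L) \<le> card {R'. up_in (P - L) R' \<and> R' \<inter> (M - L) = {} \<and> card R' = j - card L}"
        unfolding F_def by (rule card_image_le[OF fin])
      also have "\<dots> \<le> (Tb + (j - l) - card (M - L)) choose (j - l)"
      proof -
        have "j - l < j" using L(3) by auto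
        moreover have "M - L \<subseteq> max_avail (P - L)" using max_diff[of P L] M_def by simp
        moreover have "P - L \<subseteq> Q" using less.prems(2) by auto
        ultimately show ?thesis
          using less.IH[of "j - l" "P - L" "M - L"] lower_diff[OF less.prems(1) LM] L(2) by simp
      qed
      also have "Tb + (j - l) - card (M - L) = B" using cML lm mT L(3) B_def by auto
      finally show ?thesis .
    qed
    have "card ?S \<le> card (\<Union>l\<in>{1..j}. \<Union>L\<in>{L. L \<subseteq> N \<and> card L = l}. F L)"
    proof (rule card_mono[OF _ sub])
      have "(\<Union>l\<in>{1..j}. \<Union>L\<in>{L. L \<subseteq> N \<and> card L = l}. F L) \<subseteq> Pow P"
        using max_sub[of P] by (auto simp: F_def up_in_def N_def M_def)
      then show "finite (\<Union>l\<in>{1..j}. \<Union>L\<in>{L. L \<subseteq> N \<and> card L = l}. F L)"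
        using fP finite_subset by blast
    qed
    also have "\<dots> \<le> (\<Sum>l\<in>{1..j}. card (\<Union>L\<in>{L. L \<subseteq> N \<and> card L = l}. F L))"
      by (rule card_UN_le) simp
    also have "\<dots> \<le> (\<Sum>l\<in>{1..j}. \<Sum>L\<in>{L. L \<subseteq> N \<and> card L = l}. card (F L))"
    proof (rule sum_mono)
      fix l show "card (\<Union>L\<in>{L. L \<subseteq> N \<and> card L = l}. F L) \<le> (\<Sum>L\<in>{L. L \<subseteq> N \<and> card L = l}. card (F L))"
        by (rule card_UN_le) (use fM N_def in simp)
    qed
    also have "\<dots> \<le> (\<Sum>l\<in>{1..j}. \<Sum>L\<in>{L. L \<subseteq> N \<and> card L = l}. B choose (j - l))"
      by (intro sum_mono bnd) auto
    also have "\<dots> = (\<Sum>l\<in>{1..j}. (card N choose l) * (B choose (j - l)))"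
      using n_subsets[of N] fM N_def by simp
    also have "\<dots> \<le> (\<Sum>l\<le>j. (card N choose l) * (B choose (j - l)))"
      by (rule sum_mono2) auto
    also have "\<dots> = (card N + B) choose j" by (rule vandermonde)
    also have "card N + B = Tb + j - card Ob" using cN oM mT B_def by simp
    finally show ?thesis .
  qed
qed

lemma T_ge:
  assumes "lower_set d X" "finite X" "card X = n"
  shows "card (max_avail X) \<le> T d n"
proof -
  let ?S = "{card (max_avail Q) | Q. lower_set d Q \<and> finite Q \<and> card Q = n}"
  have "?S \<subseteq> {..n}"
  proof
    fix x assume "x \<in> ?S"
    then obtain Q where "x = card (max_avail Q)" "finite Q" "card Q = n" by auto
    then show "x \<in> {..n}" using card_mono[OF _ max_sub[of Q]] by auto
  qed
  then have "finite ?S" using finite_subset by blast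
  moreover have "card (max_avail X) \<in> ?S" using assms by blast
  ultimately show ?thesis unfolding T_def by (rule Max_ge)
qed

definition ax :: "nat \<Rightarrow> nat \<Rightarrow> nat list" where
  "ax d t = t # replicate (d - 1) 0"

lemma ax_len: "d \<ge> 1 \<Longrightarrow> length (ax d t) = d"
  by (simp add: ax_def)

lemma ax_nth: "i < d \<Longrightarrow> ax d t ! i = (if i = 0 then t else 0)"
  by (cases i) (auto simp: ax_def)

lemma ax_Zd: "d \<ge> 1 \<Longrightarrow> ax d t \<in> Zd d"
  by (simp add: ax_len Zd_def)

lemma ax_inj: "ax d s = ax d t \<Longrightarrow> s = t"
  by (simp add: ax_def)

lemma ax_eq:
  assumes "length q = d" "d \<ge> 1" "\<And>i. 0 < i \<Longrightarrow> i < d \<Longrightarrow> q ! i = 0"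
  shows "q = ax d (q ! 0)"
  by (rule nth_equalityI) (use assms in \<open>auto simp: ax_len ax_nth\<close>)

lemma hd_nth0: "q \<in> Zd d \<Longrightarrow> d \<ge> 1 \<Longrightarrow> hd q = q ! 0"
  by (cases q) (auto simp: Zd_def)

lemma extend:
  assumes d1: "d \<ge> 1" and lP: "lower_set d P" and fP: "finite P" and Pne: "P \<noteq> {}"
    and pn: "card P < n"
  shows "\<exists>X. lower_set d X \<and> finite X \<and> card X = n \<and> card (max_avail P) \<le> card (max_avail X)"
proof -
  define s where "s = n - card P"
  define Lm where "Lm = Max ((\<lambda>q. q ! 0) ` P)"
  define L where "L = Lm + 1"
  define E where "E = ax d ` {L..<L+s}"
  define X where "X = P \<union> E"
  have s1: "s \<ge> 1" using pn s_def by auto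
  have PZ: "P \<subseteq> Zd d" using lP by (auto simp: lower_set_def)
  have F3: "q ! 0 \<le> Lm" if "q \<in> P" for q using that fP by (auto simp: Lm_def)
  have "Lm \<in> (\<lambda>q. q ! 0) ` P" unfolding Lm_def using fP Pne by (intro Max_in) auto
  then obtain q0 where q0: "q0 \<in> P" "q0 ! 0 = Lm" by (metis imageE)
  have F2: "ax d t \<in> P" if "t \<le> Lm" for t
  proof -
    have "\<forall>i<d. ax d t ! i \<le> q0 ! i" using that q0 by (auto simp: ax_nth)
    then show ?thesis using lP q0(1) ax_Zd[OF d1] unfolding lower_set_def by blast
  qed
  have F4: "E \<inter> P = {}"
  proof -
    { fix t assume "t \<in> {L..<L+s}" "ax d t \<in> P"
      then have "ax d t ! 0 \<le> Lm" using F3 by blast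
      then have False using \<open>t \<in> {L..<L+s}\<close> d1 by (auto simp: ax_nth L_def) }
    then show ?thesis unfolding E_def by (metis (no_types, lifting) disjoint_iff imageE)
  qed
  have cE: "card E = s" unfolding E_def
    by (subst card_image) (auto intro: inj_onI ax_inj)
  have fE: "finite E" by (simp add: E_def)
  have cX: "card X = n" unfolding X_def using F4 fP fE cE s_def pn
    by (subst card_Un_disjoint) auto
  have EZ: "E \<subseteq> Zd d" using ax_Zd[OF d1] by (auto simp: E_def)
  have lX: "lower_set d X"
    unfolding lower_set_def
  proof (intro conjI ballI impI)
    show "X \<subseteq> Zd d" using PZ EZ X_def by auto
  next
    fix q q' assume q: "q \<in> X" and q': "q' \<in> Zd d" and le: "\<forall>i<d. q' ! i \<le> q ! i"
    show "q' \<in> X"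
    proof (cases "q \<in> P")
      case True then show ?thesis using lP q' le X_def unfolding lower_set_def by blast
    next
      case False
      then obtain t where t: "t \<in> {L..<L+s}" "q = ax d t" using q X_def E_def by auto
      have z: "q' ! i = 0" if "0 < i" "i < d" for i using le that t by (auto simp: ax_nth)
      have qe: "q' = ax d (q' ! 0)" by (rule ax_eq) (use q' d1 z in \<open>auto simp: Zd_def\<close>)
      have q'0: "q' ! 0 \<le> t" using le t d1 by (auto simp: ax_nth)
      show ?thesis
      proof (cases "q' ! 0 \<le> Lm")
        case True then show ?thesis using F2 qe X_def by (metis UnI1)
      next
        case False
        then have "q' ! 0 \<in> {L..<L+s}" using q'0 t L_def by auto
        then show ?thesis using qe X_def E_def by (metis UnI2 imageI)
      qed
    qed
  qed
  define top where "top = ax d (L + s - 1)"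
  have topE: "top \<in> E" using s1 by (auto simp: top_def E_def)
  have top_max: "top \<in> max_avail X"
  proof -
    have "\<not> (\<exists>y\<in>X - {top}. y \<succ> top)"
    proof
      assume "\<exists>y\<in>X - {top}. y \<succ> top"
      then obtain y where y: "y \<in> X" "y \<noteq> top" "y \<succ> top" by auto
      have y0: "L + s - 1 \<le> y ! 0" using y(3) d1 unfolding dominates_def top_def ax_len[OF d1]
        by (metis (no_types, lifting) ax_nth less_le_trans zero_less_one)
      show False
      proof (cases "y \<in> P")
        case True then show False using F3 y0 s1 L_def by fastforce
      next
        case False
        then obtain t where t: "t \<in> {L..<L+s}" "y = ax d t" using y X_def E_def by auto
        then have "t = L + s - 1" using y0 d1 by (auto simp: ax_nth)
        then show False using y t top_def by simp
      qed
    qed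
    then show ?thesis using topE X_def by (auto simp: max_avail_def)
  qed
  have top_nP: "top \<notin> max_avail P" using topE F4 max_sub[of P] by auto
  have rest: "max_avail P - {ax d Lm} \<subseteq> max_avail X"
  proof
    fix q assume qm: "q \<in> max_avail P - {ax d Lm}"
    then have qP: "q \<in> P" and qne: "q \<noteq> ax d Lm" and qmax: "\<not> (\<exists>y\<in>P - {q}. y \<succ> q)"
      by (auto simp: max_avail_def)
    have "\<not> (\<exists>y\<in>X - {q}. y \<succ> q)"
    proof
      assume "\<exists>y\<in>X - {q}. y \<succ> q"
      then obtain y where y: "y \<in> X" "y \<noteq> q" "y \<succ> q" by auto
      have "y \<notin> P" using y qmax by auto
      then obtain t where t: "y = ax d t" using y X_def E_def by auto
      have qZ: "q \<in> Zd d" using qP PZ by auto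
      have z: "q ! i = 0" if "0 < i" "i < d" for i
        using y(3) t that d1 by (auto simp: dominates_def ax_len ax_nth split: if_splits)
      have qe: "q = ax d (q ! 0)" by (rule ax_eq) (use qZ d1 z in \<open>auto simp: Zd_def\<close>)
      have "q ! 0 \<le> Lm" using F3 qP by auto
      moreover have "q ! 0 \<noteq> Lm" using qe qne by metis
      ultimately have lt: "q ! 0 < Lm" by simp
      have "ax d Lm \<succ> ax d (q ! 0)" using lt d1
        by (auto simp: dominates_def ax_len ax_nth)
      then have "ax d Lm \<succ> q" using qe by metis
      moreover have "ax d Lm \<in> P - {q}" using F2 qne by auto
      ultimately show False using qmax by blast
    qed
    then show "q \<in> max_avail X" using qP X_def by (auto simp: max_avail_def)
  qed
  have fMX: "finite (max_avail X)" using fP fE X_def max_sub[of X] finite_subset by blast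
  have fMP: "finite (max_avail P)" using fP max_sub[of P] finite_subset by blast
  have "card (max_avail P) \<le> card (insert top (max_avail P - {ax d Lm}))"
  proof -
    have e: "card (insert top (max_avail P - {ax d Lm})) = Suc (card (max_avail P - {ax d Lm}))"
      using top_nP fMP by simp
    show ?thesis
    proof (cases "ax d Lm \<in> max_avail P")
      case True
      then show ?thesis using e card_Suc_Diff1[OF fMP True] by simp
    next
      case False
      then show ?thesis using e by simp
    qed
  qed
  also have "\<dots> \<le> card (max_avail X)"
    by (rule card_mono[OF fMX]) (use rest top_max in auto)
  finally show ?thesis using lX fP fE cX X_def by blast
qed

lemma hT_lemma:
  assumes d1: "d \<ge> 1" and lP: "lower_set d P" and PQ: "P \<subseteq> Q" and fQ: "finite Q" and n: "card Q = n"
  shows "card (max_avail P) \<le> T d n"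
proof -
  have fP: "finite P" using PQ fQ finite_subset by blast
  have pn: "card P \<le> n" using card_mono[OF fQ PQ] n by simp
  show ?thesis
  proof (cases "P = {}")
    case True then show ?thesis by (simp add: max_avail_def)
  next
    case False
    show ?thesis
    proof (cases "card P = n")
      case True then show ?thesis using T_ge lP fP by blast
    next
      case False
      then obtain X where "lower_set d X" "finite X" "card X = n" "card (max_avail P) \<le> card (max_avail X)"
        using extend[OF d1 lP fP \<open>P \<noteq> {}\<close>, of n] pn False by (meson le_neq_implies_less)
      then show ?thesis using T_ge[of d X n] by linarith
    qed
  qed
qed

theorem lemma2:
  fixes d n k :: nat and Q :: "nat list set"
  assumes "d \<ge> 1" and "lower_set d Q" and "finite Q" and "card Q = n" and "k > 0"
  shows "real (C Q k d) < (max 8 (4 * exp 1 * real (T d n) / real k)) ^ k"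
proof -
  let ?A = "{Q'. Q' \<subseteq> Q \<and> lower_set d Q' \<and> card Q' + k \<ge> card Q}"
  let ?U = "\<Union>j\<in>{..k}. {R. up_in Q R \<and> R \<inter> {} = {} \<and> card R = j}"
  have QZ: "Q \<subseteq> Zd d" using assms(2) by (auto simp: lower_set_def)
  have inj: "inj_on (\<lambda>Q'. Q - Q') ?A" by (rule inj_onI) blast
  have img: "(\<lambda>Q'. Q - Q') ` ?A \<subseteq> ?U"
  proof
    fix R assume "R \<in> (\<lambda>Q'. Q - Q') ` ?A"
    then obtain Q' where Q': "Q' \<subseteq> Q" "lower_set d Q'" "card Q' + k \<ge> card Q" and R: "R = Q - Q'" by auto
    have up: "up_in Q R"
      unfolding up_in_def
    proof (intro conjI ballI impI)
      show "R \<subseteq> Q" using R by auto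
    next
      fix x y assume x: "x \<in> R" and y: "y \<in> Q" and yx: "y \<succ> x"
      show "y \<in> R"
      proof (rule ccontr)
        assume "y \<notin> R"
        then have "y \<in> Q'" using y R by auto
        moreover have "x \<in> Zd d" using x R QZ by auto
        moreover have "\<forall>i<d. x ! i \<le> y ! i" using yx y QZ by (auto simp: dominates_def Zd_def)
        ultimately have "x \<in> Q'" using Q'(2) unfolding lower_set_def by blast
        then show False using x R by auto
      qed
    qed
    have "card R = card Q - card Q'" using R card_Diff_subset[of Q' Q] Q'(1) assms(3) finite_subset by metis
    then have "card R \<le> k" using Q'(3) by linarith
    then show "R \<in> ?U" using up by auto
  qed
  have fU: "finite ?U"
  proof (rule finite_subset[of _ "Pow Q"])
    show "?U \<subseteq> Pow Q" by (auto simp: up_in_def)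
  qed (use assms(3) in simp)
  have "C Q k d = card ?A" by (simp add: C_def)
  also have "\<dots> = card ((\<lambda>Q'. Q - Q') ` ?A)" by (rule card_image[OF inj, symmetric])
  also have "\<dots> \<le> card ?U" by (rule card_mono[OF fU img])
  also have "\<dots> \<le> (\<Sum>j\<le>k. card {R. up_in Q R \<and> R \<inter> {} = {} \<and> card R = j})"
    by (rule card_UN_le) simp
  also have "\<dots> \<le> (\<Sum>j\<le>k. (T d n + j - card ({}::nat list set)) choose j)"
  proof (rule sum_mono)
    fix j
    show "card {R. up_in Q R \<and> R \<inter> {} = {} \<and> card R = j} \<le> (T d n + j - card ({}::nat list set)) choose j"
      by (rule count_up[of d Q "T d n"]) (use hT_lemma[OF assms(1) _ _ assms(3,4)] assms(2,3) in auto)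
  qed
  also have "\<dots> = Suc (T d n + k) choose k" using sum_choose_lower[of "T d n" k] by simp
  finally have "real (C Q k d) \<le> real (Suc (T d n + k) choose k)" by (simp only: of_nat_le_iff)
  also have "\<dots> < (max 8 (4 * exp 1 * real (T d n) / real k)) ^ k" by (rule num_bound[OF assms(5)])
  finally show ?thesis .
qed

end
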